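(* Let $R:\ \mu=\rho^{(0)}\to\dots\to\rho^{(l)}=\nu$ be a sequence of diagrams and let $T\in\mathcal{T}(\lambda,R)$. If $$\prod_{\substack{\alpha\in\lambda\\ T(\alpha)\text{ unbarred}}}\Big(a_{T(\alpha)-\rho(\alpha)_{T(\alpha)}}-a_{T(\alpha)-c(\alpha)}\Big)\neq 0,$$ then $T$ is $\nu$-bounded.
   Context: $a=(a_i)_{i\in\mathbb{Z}}$ are independent variables. Partitions are identified with Young diagrams; box $(i,j)$ is in row $i$, column $j$; content $c(\alpha)=j-i$; $\nu'_j$ is the length of column $j$ of $\nu$. A reverse $\lambda$-tableau is a filling $T$ of $\lambda$ by positive integers weakly decreasing along rows and strictly decreasing down columns. $\rho\to\sigma$ means $\sigma$ is obtained from $\rho$ by adding one box; for $R:\ \mu=\rho^{(0)}\to\dots\to\rho^{(l)}=\nu$, $r_i$ is the row of the box added to $\rho^{(i-1)}$. Column order: columns left to right, within a column bottom to top; $\prec$ is strict precedence. $\mathcal{T}(\lambda,R)$ consists of reverse $\lambda$-tableaux $T$ with chosen boxes $\alpha_1\prec\dots\prec\alpha_l$ such that $T(\alpha_i)=r_i$; those entries are barred, the rest unbarred. For $\alpha$ with $\alpha_i\prec\alpha\prec\alpha_{i+1}$ ($0\le i\le l$, conditions with $\alpha_0,\alpha_{l+1}$ void), $\rho(\alpha)=\rho^{(i)}$, and $\rho(\alpha)_k$ is the length of row $k$ of $\rho(\alpha)$. $T$ is $\nu$-bounded if $T(1,j)\le\nu'_j$ for all $j=1,\dots,\lambda_1$.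 *)

theory Defs
  imports Main
begin

text \<open>Partitions are nat lists, weakly decreasing with positive parts.
  Row k (k >= 1) has length lam ! (k - 1). Boxes are pairs (row, column), 1-based.\<close>

definition is_partition :: "nat list \<Rightarrow> bool" where
  "is_partition lam \<longleftrightarrow> sorted_wrt (\<ge>) lam \<and> (\<forall>x\<in>set lam. 0 < x)"

definition rowlen :: "nat list \<Rightarrow> nat \<Rightarrow> nat" where
  "rowlen lam k = (if 1 \<le> k \<and> k \<le> length lam then lam ! (k - 1) else 0)"

definition diagram :: "nat list \<Rightarrow> (nat \<times> nat) set" where
  "diagram lam = {(i, j). 1 \<le> i \<and> 1 \<le> j \<and> j \<le> rowlen lam i}"

definition collen :: "nat list \<Rightarrow> nat \<Rightarrow> nat" where
  "collen lam j = card {i. (i, j) \<in> diagram lam}"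

definition content :: "nat \<times> nat \<Rightarrow> int" where
  "content \<alpha> = int (snd \<alpha>) - int (fst \<alpha>)"

definition adds_box_in_row :: "nat list \<Rightarrow> nat list \<Rightarrow> nat \<Rightarrow> bool" where
  "adds_box_in_row rho sigma k \<longleftrightarrow> 1 \<le> k \<and> rowlen sigma k = rowlen rho k + 1 \<and>
     (\<forall>k'. k' \<noteq> k \<longrightarrow> rowlen sigma k' = rowlen rho k')"

definition adds_box :: "nat list \<Rightarrow> nat list \<Rightarrow> bool" where
  "adds_box rho sigma \<longleftrightarrow> (\<exists>k. adds_box_in_row rho sigma k)"

definition added_row :: "nat list \<Rightarrow> nat list \<Rightarrow> nat" where
  "added_row rho sigma = (THE k. adds_box_in_row rho sigma k)"

text \<open>R : mu = rho^(0) -> ... -> rho^(l) = nu, given as the list [rho^(0), ..., rho^(l)].\<close>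
definition is_box_sequence :: "nat list list \<Rightarrow> nat list \<Rightarrow> nat list \<Rightarrow> bool" where
  "is_box_sequence R mu nu \<longleftrightarrow> R \<noteq> [] \<and> hd R = mu \<and> last R = nu \<and>
     (\<forall>\<rho>\<in>set R. is_partition \<rho>) \<and>
     (\<forall>i. Suc i < length R \<longrightarrow> adds_box (R ! i) (R ! Suc i))"

definition seq_row :: "nat list list \<Rightarrow> nat \<Rightarrow> nat" where
  "seq_row R i = added_row (R ! (i - 1)) (R ! i)"

definition reverse_tableau :: "nat list \<Rightarrow> (nat \<times> nat \<Rightarrow> nat) \<Rightarrow> bool" where
  "reverse_tableau lam T \<longleftrightarrow>
     (\<forall>\<alpha>\<in>diagram lam. 0 < T \<alpha>) \<and>
     (\<forall>i j. (i, j) \<in> diagram lam \<and> (i, Suc j) \<in> diagram lam \<longrightarrow> T (i, Suc j) \<le> T (i, j)) \<and>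
     (\<forall>i j. (i, j) \<in> diagram lam \<and> (Suc i, j) \<in> diagram lam \<longrightarrow> T (Suc i, j) < T (i, j))"

definition col_prec :: "nat \<times> nat \<Rightarrow> nat \<times> nat \<Rightarrow> bool" where
  "col_prec \<alpha> \<beta> \<longleftrightarrow> snd \<alpha> < snd \<beta> \<or> (snd \<alpha> = snd \<beta> \<and> fst \<beta> < fst \<alpha>)"

text \<open>(T, A) in T(lam, R): A = [alpha_1, ..., alpha_l] are the chosen (barred) boxes.\<close>
definition in_TT :: "nat list \<Rightarrow> nat list list \<Rightarrow> (nat \<times> nat \<Rightarrow> nat) \<Rightarrow> (nat \<times> nat) list \<Rightarrow> bool" where
  "in_TT lam R T A \<longleftrightarrow> reverse_tableau lam T \<and> length A + 1 = length R \<and>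
     set A \<subseteq> diagram lam \<and> sorted_wrt col_prec A \<and>
     (\<forall>i. 1 \<le> i \<and> i \<le> length A \<longrightarrow> T (A ! (i - 1)) = seq_row R i)"

definition rho_at :: "nat list list \<Rightarrow> (nat \<times> nat) list \<Rightarrow> nat \<times> nat \<Rightarrow> nat list" where
  "rho_at R A \<alpha> = R ! length (filter (\<lambda>\<beta>. col_prec \<beta> \<alpha>) A)"

definition nu_bounded :: "nat list \<Rightarrow> nat list \<Rightarrow> (nat \<times> nat \<Rightarrow> nat) \<Rightarrow> bool" where
  "nu_bounded nu lam T \<longleftrightarrow> (\<forall>j. 1 \<le> j \<and> j \<le> rowlen lam 1 \<longrightarrow> T (1, j) \<le> collen nu j)"

end

theory Submission
  imports Defs
begin

lemma col_prec_irrefl: "\<not> col_prec a a" by (auto simp: col_prec_def)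
lemma col_prec_asym: "col_prec a b \<Longrightarrow> \<not> col_prec b a" by (auto simp: col_prec_def)

lemma filter_len_mono: "(\<And>x. P x \<Longrightarrow> Q x) \<Longrightarrow> length (filter P xs) \<le> length (filter Q xs)"
  by (induction xs) auto

lemma cnt_nth:
  assumes "sorted_wrt col_prec A" "p < length A"
  shows "length (filter (\<lambda>\<beta>. col_prec \<beta> (A!p)) A) = p"
proof -
  have "{q. q < length A \<and> col_prec (A!q) (A!p)} = {..<p}"
  proof (intro set_eqI iffI)
    fix q assume "q \<in> {q. q < length A \<and> col_prec (A!q) (A!p)}"
    then have q: "q < length A" "col_prec (A!q) (A!p)" by auto
    show "q \<in> {..<p}"
    proof (rule ccontr)
      assume "q \<notin> {..<p}"
      then have "p = q \<or> p < q" by auto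
      then show False
        using q sorted_wrt_nth_less[OF assms(1), of p q] col_prec_irrefl col_prec_asym by metis
    qed
  next
    fix q assume "q \<in> {..<p}"
    then show "q \<in> {q. q < length A \<and> col_prec (A!q) (A!p)}"
      using sorted_wrt_nth_less[OF assms(1), of q p] assms(2) by auto
  qed
  then show ?thesis by (simp add: length_filter_conv_card)
qed

lemma m_nth:
  assumes "sorted_wrt col_prec A" "p < length A"
  shows "length (filter (\<lambda>\<beta>. col_prec \<beta> (A!p) \<or> \<beta> = A!p) A) = Suc p"
proof -
  have "{q. q < length A \<and> (col_prec (A!q) (A!p) \<or> A!q = A!p)} = {..<Suc p}"
  proof (intro set_eqI iffI)
    fix q assume "q \<in> {q. q < length A \<and> (col_prec (A!q) (A!p) \<or> A!q = A!p)}"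
    then have q: "q < length A" "col_prec (A!q) (A!p) \<or> A!q = A!p" by auto
    show "q \<in> {..<Suc p}"
    proof (rule ccontr)
      assume "q \<notin> {..<Suc p}"
      then have "p < q" by auto
      then show False
        using q sorted_wrt_nth_less[OF assms(1), of p q] col_prec_irrefl col_prec_asym by metis
    qed
  next
    fix q assume "q \<in> {..<Suc p}"
    then show "q \<in> {q. q < length A \<and> (col_prec (A!q) (A!p) \<or> A!q = A!p)}"
      using sorted_wrt_nth_less[OF assms(1), of q p] assms(2)
      by (cases "q = p") auto
  qed
  then show ?thesis by (simp add: length_filter_conv_card)
qed

lemma adds_box_mono: "adds_box rho sigma \<Longrightarrow> rowlen rho r \<le> rowlen sigma r"
  unfolding adds_box_def adds_box_in_row_def by (metis le_add1 order_refl)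

lemma R_mono:
  assumes "\<forall>i. Suc i < length R \<longrightarrow> adds_box (R!i) (R!Suc i)" "k \<le> k'" "k' < length R"
  shows "rowlen (R!k) r \<le> rowlen (R!k') r"
  using assms(2,3)
proof (induction k')
  case 0 then show ?case by simp
next
  case (Suc k')
  show ?case
  proof (cases "k = Suc k'")
    case True then show ?thesis by simp
  next
    case False
    then have "rowlen (R!k) r \<le> rowlen (R!k') r" using Suc by simp
    also have "\<dots> \<le> rowlen (R!Suc k') r" using adds_box_mono assms(1) Suc.prems by blast
    finally show ?thesis .
  qed
qed

lemma added_row_eq: "adds_box_in_row rho sigma k \<Longrightarrow> added_row rho sigma = k"
  unfolding added_row_def
  by (rule the_equality) (auto simp: adds_box_in_row_def)

lemma part_anti:
  assumes "is_partition lam" "1 \<le> k" "k \<le> k'"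
  shows "rowlen lam k' \<le> rowlen lam k"
proof (cases "k' \<le> length lam")
  case True
  then show ?thesis using assms sorted_wrt_nth_less[of "(\<ge>)" lam "k-1" "k'-1"]
    unfolding is_partition_def rowlen_def
    by (cases "k = k'") auto
next
  case False then show ?thesis by (simp add: rowlen_def)
qed

lemma diagram_finite: "finite (diagram lam)"
proof -
  have "diagram lam \<subseteq> (SIGMA i:{1..length lam}. {1..rowlen lam i})"
    by (auto simp: diagram_def rowlen_def split: if_splits)
  then show ?thesis by (rule finite_subset) auto
qed

theorem lemma2p4:
  fixes a :: "int \<Rightarrow> 'a::idom"
  assumes "inj a"
    and "is_partition lam" and "is_partition mu" and "is_partition nu"
    and "is_box_sequence R mu nu"
    and "in_TT lam R T A"
    and "(\<Prod>\<alpha>\<in>{\<alpha>\<in>diagram lam. \<alpha> \<notin> set A}.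
            a (int (T \<alpha>) - int (rowlen (rho_at R A \<alpha>) (T \<alpha>))) - a (int (T \<alpha>) - content \<alpha>)) \<noteq> 0"
  shows "nu_bounded nu lam T"
proof -
  from assms(5) have Rne: "R \<noteq> []" and lastR: "last R = nu"
    and Rpart: "\<forall>\<rho>\<in>set R. is_partition \<rho>"
    and Radd: "\<forall>i. Suc i < length R \<longrightarrow> adds_box (R ! i) (R ! Suc i)"
    unfolding is_box_sequence_def by auto
  from assms(6) have tab: "reverse_tableau lam T" and lenA: "length A + 1 = length R"
    and Asort: "sorted_wrt col_prec A"
    and Aval: "\<forall>i. 1 \<le> i \<and> i \<le> length A \<longrightarrow> T (A ! (i - 1)) = seq_row R i"
    unfolding in_TT_def by auto
  define cnt where "cnt \<alpha> = length (filter (\<lambda>\<beta>. col_prec \<beta> \<alpha>) A)" for \<alpha>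
  define m where "m \<alpha> = length (filter (\<lambda>\<beta>. col_prec \<beta> \<alpha> \<or> \<beta> = \<alpha>) A)" for \<alpha>
  have cntle: "cnt \<alpha> \<le> length A" for \<alpha> unfolding cnt_def by simp
  have mle: "m \<alpha> \<le> length A" for \<alpha> unfolding m_def by simp
  have fin: "finite {\<alpha>\<in>diagram lam. \<alpha> \<notin> set A}" using diagram_finite by auto
  have fac: "int (rowlen (R ! cnt \<alpha>) (T \<alpha>)) \<noteq> content \<alpha>"
    if "\<alpha> \<in> diagram lam" "\<alpha> \<notin> set A" for \<alpha>
  proof
    assume "int (rowlen (R ! cnt \<alpha>) (T \<alpha>)) = content \<alpha>"
    then have "a (int (T \<alpha>) - int (rowlen (rho_at R A \<alpha>) (T \<alpha>))) - a (int (T \<alpha>) - content \<alpha>) = 0"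
      by (simp add: rho_at_def cnt_def)
    moreover have "\<forall>\<beta>\<in>{\<alpha>\<in>diagram lam. \<alpha> \<notin> set A}.
            a (int (T \<beta>) - int (rowlen (rho_at R A \<beta>) (T \<beta>))) - a (int (T \<beta>) - content \<beta>) \<noteq> 0"
      using assms(7) fin prod_zero_iff by blast
    ultimately show False using that by blast
  qed
  have Tpos: "0 < T \<alpha>" if "\<alpha> \<in> diagram lam" for \<alpha>
    using tab that unfolding reverse_tableau_def by blast
  have key: "\<forall>i. (i,j) \<in> diagram lam \<longrightarrow> int j - int i + 1 \<le> int (rowlen (R ! m (i,j)) (T (i,j)))" for j
  proof (induction j)
    case 0 show ?case by (simp add: diagram_def)
  next
    case (Suc j)
    show ?case
    proof (intro allI impI)
      fix i assume ij: "(i, Suc j) \<in> diagram lam"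
      define t where "t = T (i, Suc j)"
      have ipos: "1 \<le> i" using ij by (simp add: diagram_def)
      have lower: "int (Suc j) - int i \<le> int (rowlen (R ! cnt (i,Suc j)) t)"
      proof (cases "j = 0")
        case True then show ?thesis using ipos by simp
      next
        case False
        then have ij': "(i,j) \<in> diagram lam" using ij by (auto simp: diagram_def)
        have IH: "int j - int i + 1 \<le> int (rowlen (R ! m (i,j)) (T (i,j)))" using Suc.IH ij' by blast
        have tle: "t \<le> T (i,j)" using tab ij ij' unfolding reverse_tableau_def t_def by blast
        have tpos: "1 \<le> t" using Tpos[OF ij] t_def by simp
        have mc: "m (i,j) \<le> cnt (i,Suc j)" unfolding m_def cnt_def
          by (rule filter_len_mono) (auto simp: col_prec_def)
        have part: "is_partition (R ! cnt (i,Suc j))" using Rpart cntle[of "(i,Suc j)"] lenA by simp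
        have "rowlen (R ! m (i,j)) (T (i,j)) \<le> rowlen (R ! cnt (i,Suc j)) (T (i,j))"
          using R_mono[OF Radd mc] cntle[of "(i,Suc j)"] lenA by simp
        also have "\<dots> \<le> rowlen (R ! cnt (i,Suc j)) t" using part_anti[OF part tpos tle] .
        finally show ?thesis using IH by linarith
      qed
      show "int (Suc j) - int i + 1 \<le> int (rowlen (R ! m (i, Suc j)) (T (i, Suc j)))"
      proof (cases "(i,Suc j) \<in> set A")
        case False
        have "m (i,Suc j) = cnt (i,Suc j)" unfolding m_def cnt_def
          using False by (metis (mono_tags, lifting) filter_cong)
        moreover have "int (rowlen (R ! cnt (i,Suc j)) t) \<noteq> int (Suc j) - int i"
          using fac[OF ij False] by (simp add: t_def content_def)
        ultimately show ?thesis using lower t_def by simp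
      next
        case True
        then obtain p where p: "p < length A" "A ! p = (i,Suc j)" by (auto simp: in_set_conv_nth)
        have c: "cnt (i,Suc j) = p" using cnt_nth[OF Asort p(1)] p(2) by (simp add: cnt_def)
        have mm: "m (i,Suc j) = Suc p" using m_nth[OF Asort p(1)] p(2) by (simp add: m_def)
        have "T (A ! p) = seq_row R (Suc p)" using Aval[rule_format, of "Suc p"] p(1) by simp
        then have Tt: "t = added_row (R!p) (R!Suc p)" using p(2) by (simp add: t_def seq_row_def)
        have "adds_box (R!p) (R!Suc p)" using Radd p(1) lenA by simp
        then obtain k where k: "adds_box_in_row (R!p) (R!Suc p) k" by (auto simp: adds_box_def)
        then have "t = k" using Tt added_row_eq by simp
        then have "rowlen (R!Suc p) t = rowlen (R!p) t + 1" using k by (simp add: adds_box_in_row_def)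
        then show ?thesis using lower c mm t_def by simp
      qed
    qed
  qed
  show ?thesis
    unfolding nu_bounded_def
  proof (intro allI impI)
    fix j assume j: "1 \<le> j \<and> j \<le> rowlen lam 1"
    then have d: "(1,j) \<in> diagram lam" by (simp add: diagram_def)
    define t where "t = T (1,j)"
    have "int j \<le> int (rowlen (R ! m (1,j)) t)" using key[of j] d t_def by auto
    moreover have "rowlen (R ! m (1,j)) t \<le> rowlen (R ! length A) t"
      using R_mono[OF Radd mle[of "(1,j)"]] lenA by simp
    moreover have "R ! length A = nu" using lastR Rne lenA by (metis last_conv_nth add_diff_cancel_right')
    ultimately have jt: "j \<le> rowlen nu t" by simp
    have tpos: "1 \<le> t" using Tpos[OF d] t_def by simp
    have sub: "{1..t} \<subseteq> {i. (i, j) \<in> diagram nu}"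
    proof
      fix k assume "k \<in> {1..t}"
      then have "1 \<le> k" "k \<le> t" by auto
      then have "rowlen nu t \<le> rowlen nu k" using part_anti[OF assms(4)] by blast
      then show "k \<in> {i. (i, j) \<in> diagram nu}" using jt j \<open>1 \<le> k\<close> by (simp add: diagram_def)
    qed
    have "{i. (i, j) \<in> diagram nu} \<subseteq> {..length nu}"
      using j by (auto simp: diagram_def rowlen_def split: if_splits)
    then have "finite {i. (i, j) \<in> diagram nu}" by (rule finite_subset) auto
    then have "card {1..t} \<le> collen nu j" unfolding collen_def using sub card_mono by blast
    then show "T (1, j) \<le> collen nu j" using t_def by simp
  qed
qed

end
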